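(* Let $\boldsymbol{\mathcal V}(x)=\sum_{n\ge0}x^n\sum_{r\in\mathcal V_n}\overline{\d}(r)$. Then \[ \boldsymbol{\mathcal V}=2x\boldsymbol{\mathcal V}+2x^2\boldsymbol{\mathcal M}(x,1)\mathcal V+2x^2\mathcal M(x,1)\boldsymbol{\mathcal V}+2x^2\mathcal V\,\tfrac{\partial}{\partial x}\big(x\mathcal M(x,1)\big)+2x\boldsymbol{\mathcal N}+2x\,\tfrac{\partial}{\partial x}\big(x\mathcal N\big), \] and explicitly \[ \boldsymbol{\mathcal V}(x)=\frac{8x\left(1+\sqrt{1-4x}-x\big(3+\sqrt{1-4x}\big)\right)}{(1-4x)\big(1-4x+\sqrt{1-4x}\big)^3}. \]
   Context: Steps: $U=(1,1)$, $D=(1,-1)$, two distinguishable copies $O_1,O_2$ of $(1,0)$. $\mathcal V_n$: paths starting at $(0,0)$ with $n$ steps in $\{U,D,O_1,O_2\}$, ending anywhere; $\mathcal N_n\subseteq\mathcal V_n$: those staying weakly above the $x$-axis. For a path $r$ with heights $r_0=0,\dots,r_n$, $\overline{\d}(r)=\sum_{i=0}^n|r_i|$. $\mathcal V(x)=\sum|\mathcal V_n|x^n$, $\mathcal N(x)=\sum|\mathcal N_n|x^n$, $\boldsymbol{\mathcal N}(x)=\sum_n x^n\sum_{r\in\mathcal N_n}\overline{\d}(r)$; $\mathcal M(x,1)$ and $\boldsymbol{\mathcal M}(x,1)$ are the generating functions by length, respectively unweighted and weighted by $\overline{\d}$, of paths in $\bigcup_n\mathcal N_n$ that end on the $x$-axis.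 *)

theory Defs
  imports Complex_Main "HOL-Computational_Algebra.Formal_Power_Series"
begin

text \<open>Steps U=(1,1), D=(1,-1), and two distinguishable copies O1, O2 of (1,0).\<close>
datatype step = U | D | O1 | O2

fun step_height :: "step \<Rightarrow> int" where
  "step_height U = 1"
| "step_height D = -1"
| "step_height O1 = 0"
| "step_height O2 = 0"

text \<open>A path with n steps is a list of steps of length n, starting at (0,0).
  Its height after i steps (0 \<le> i \<le> n) is r_i.\<close>
definition height :: "step list \<Rightarrow> nat \<Rightarrow> int" where
  "height r i = sum_list (map step_height (take i r))"

definition dbar :: "step list \<Rightarrow> nat" where
  "dbar r = (\<Sum>i\<le>length r. nat \<bar>height r i\<bar>)"

definition Vset :: "nat \<Rightarrow> step list set" where
  "Vset n = {r. length r = n}"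

definition Nset :: "nat \<Rightarrow> step list set" where
  "Nset n = {r \<in> Vset n. \<forall>i\<le>n. height r i \<ge> 0}"

definition Mset :: "nat \<Rightarrow> step list set" where
  "Mset n = {r \<in> Nset n. height r n = 0}"

definition gf :: "(nat \<Rightarrow> step list set) \<Rightarrow> real fps" where
  "gf S = Abs_fps (\<lambda>n. real (card (S n)))"

definition wgf :: "(nat \<Rightarrow> step list set) \<Rightarrow> real fps" where
  "wgf S = Abs_fps (\<lambda>n. real (\<Sum>r\<in>S n. dbar r))"

end

theory Submission
  imports Defs "HOL-Analysis.Analysis"
begin


fun ds :: "int \<Rightarrow> step list \<Rightarrow> nat" where
  "ds c [] = 0"
| "ds c (s#r) = nat \<bar>c + step_height s\<bar> + ds (c + step_height s) r"

fun ok :: "int \<Rightarrow> step list \<Rightarrow> bool" where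
  "ok c [] = True"
| "ok c (s#r) = (c + step_height s \<ge> 0 \<and> ok (c + step_height s) r)"

definition hs :: "step list \<Rightarrow> int" where
  "hs r = sum_list (map step_height r)"

lemma hs_simps[simp]: "hs [] = 0" "hs (s#r) = step_height s + hs r" "hs (a@b) = hs a + hs b"
  by (simp_all add: hs_def)

lemma height_0[simp]: "height r 0 = 0" by (simp add: height_def)
lemma height_Cons_Suc[simp]: "height (s#r) (Suc i) = step_height s + height r i"
  by (simp add: height_def)
lemma height_len[simp]: "height r (length r) = hs r" by (simp add: height_def hs_def)

lemma all_le_Suc_iff: "(\<forall>i\<le>Suc m. P i) \<longleftrightarrow> P 0 \<and> (\<forall>j\<le>m. P (Suc j))"
  by (auto, case_tac i, auto)

lemma ok_iff: "(\<forall>i\<le>length r. c + height r i \<ge> 0) \<longleftrightarrow> (c \<ge> 0 \<and> ok c r)"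
proof (induction r arbitrary: c)
  case Nil then show ?case by simp
next
  case (Cons s r)
  show ?case unfolding length_Cons all_le_Suc_iff height_0 height_Cons_Suc
    using Cons.IH[of "c + step_height s"] by (auto simp: add.assoc)
qed

lemma dbar_gen: "(\<Sum>i\<le>length r. nat \<bar>c + height r i\<bar>) = nat \<bar>c\<bar> + ds c r"
proof (induction r arbitrary: c)
  case Nil then show ?case by simp
next
  case (Cons s r)
  show ?case unfolding length_Cons sum.atMost_Suc_shift height_0 height_Cons_Suc
    using Cons.IH[of "c + step_height s"] by (simp add: add.assoc)
qed

lemma dbar_ds: "dbar r = ds 0 r"
  using dbar_gen[where r=r and c=0] by (simp add: dbar_def)

lemma ds_append: "ds c (a@b) = ds c a + ds (c + hs a) b"
  by (induction a arbitrary: c) (auto simp: add.assoc)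

lemma ok_append: "ok c (a@b) = (ok c a \<and> ok (c + hs a) b)"
  by (induction a arbitrary: c) (auto simp: add.assoc)

lemma Nset_ok: "Nset n = {r. length r = n \<and> ok 0 r}"
  using ok_iff[where c=0] by (auto simp: Nset_def Vset_def)

lemma Mset_ok: "Mset n = {r. length r = n \<and> ok 0 r \<and> hs r = 0}"
  by (auto simp: Mset_def Nset_ok)

lemma UNIV_step: "(UNIV :: step set) = {U, D, O1, O2}"
  using step.exhaust by auto

lemma finite_Vset[simp]: "finite (Vset n)"
proof -
  have "Vset n = {xs. set xs \<subseteq> UNIV \<and> length xs = n}" by (simp add: Vset_def)
  moreover have "finite (UNIV :: step set)" by (simp add: UNIV_step)
  ultimately show ?thesis using finite_lists_length_eq by metis
qed

lemma finite_Nset[simp]: "finite (Nset n)" by (simp add: Nset_def)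
lemma finite_Mset[simp]: "finite (Mset n)" by (simp add: Mset_def)

lemma sum_Vset_Suc_Cons:
  fixes f :: "step list \<Rightarrow> 'a::comm_monoid_add"
  shows "(\<Sum>r\<in>Vset (Suc n). f r) = (\<Sum>r\<in>Vset n. f (U#r) + f (D#r) + f (O1#r) + f (O2#r))"
proof -
  have e: "Vset (Suc n) = (\<lambda>(s,r). s#r) ` (UNIV \<times> Vset n)"
    by (auto simp: Vset_def image_def length_Suc_conv)
  have i: "inj_on (\<lambda>(s,r). s#r) (UNIV \<times> Vset n)" by (auto simp: inj_on_def)
  have "(\<Sum>r\<in>Vset (Suc n). f r) = (\<Sum>(s,r)\<in>UNIV \<times> Vset n. f (s#r))"
    unfolding e by (subst sum.reindex[OF i]) (simp add: case_prod_unfold)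
  also have "\<dots> = (\<Sum>s\<in>UNIV. \<Sum>r\<in>Vset n. f (s#r))"
    by (simp add: sum.cartesian_product)
  also have "\<dots> = (\<Sum>r\<in>Vset n. f (U#r) + f (D#r) + f (O1#r) + f (O2#r))"
    by (simp add: UNIV_step sum.distrib add.assoc)
  finally show ?thesis .
qed

lemma sum_Vset_Suc_snoc:
  fixes f :: "step list \<Rightarrow> 'a::comm_monoid_add"
  shows "(\<Sum>r\<in>Vset (Suc n). f r) = (\<Sum>r\<in>Vset n. f (r@[U]) + f (r@[D]) + f (r@[O1]) + f (r@[O2]))"
proof -
  have e: "Vset (Suc n) = (\<lambda>(s,r). r@[s]) ` (UNIV \<times> Vset n)"
    by (auto simp: Vset_def image_def length_Suc_conv_rev)
  have i: "inj_on (\<lambda>(s,r). r@[s]) (UNIV \<times> Vset n)" by (auto simp: inj_on_def)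
  have "(\<Sum>r\<in>Vset (Suc n). f r) = (\<Sum>(s,r)\<in>UNIV \<times> Vset n. f (r@[s]))"
    unfolding e by (subst sum.reindex[OF i]) (simp add: case_prod_unfold)
  also have "\<dots> = (\<Sum>s\<in>UNIV. \<Sum>r\<in>Vset n. f (r@[s]))"
    by (simp add: sum.cartesian_product)
  also have "\<dots> = (\<Sum>r\<in>Vset n. f (r@[U]) + f (r@[D]) + f (r@[O1]) + f (r@[O2]))"
    by (simp add: UNIV_step sum.distrib add.assoc)
  finally show ?thesis .
qed

lemma Vset_0: "Vset 0 = {[]}" by (auto simp: Vset_def)




definition Wc :: "nat \<Rightarrow> real" where "Wc n = (\<Sum>r\<in>Vset n. real (dbar r))"
definition Ec :: "nat \<Rightarrow> real" where "Ec n = (\<Sum>r\<in>Vset n. real (nat \<bar>hs r\<bar>))"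
definition cnt :: "nat \<Rightarrow> int \<Rightarrow> real" where "cnt n h = (\<Sum>r\<in>Vset n. if hs r = h then 1 else 0)"
definition cb :: "nat \<Rightarrow> int \<Rightarrow> real" where
  "cb n h = (if int n + h < 0 then 0 else real ((2*n) choose nat (int n + h)))"

lemma cnt_0: "cnt 0 h = (if h = 0 then 1 else 0)" by (simp add: cnt_def Vset_0)

lemma cnt_Suc: "cnt (Suc n) h = cnt n (h-1) + cnt n (h+1) + 2 * cnt n h"
  unfolding cnt_def sum_Vset_Suc_Cons
  by (simp add: sum.distrib sum_distrib_left algebra_simps eq_diff_eq flip: of_nat_sum)

lemma cb_Suc: "cb (Suc n) h = cb n (h-1) + cb n (h+1) + 2 * cb n h"
proof -
  consider "int n + 1 + h < 0" | "int n + 1 + h = 0" | "int n + 1 + h = 1" | k where "int n + 1 + h = int k + 2"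
  proof -
    have "int n + 1 + h < 0 \<or> int n + 1 + h = 0 \<or> int n + 1 + h = 1 \<or> int n + 1 + h = int (nat (int n + 1 + h - 2)) + 2" by linarith
    then show ?thesis using that by blast
  qed
  then show ?thesis
  proof cases
    case 1 then show ?thesis by (simp add: cb_def)
  next
    case 2 then have "h = - int n - 1" by simp
    then show ?thesis by (simp add: cb_def)
  next
    case 3 then have "h = - int n" by simp
    then show ?thesis by (simp add: cb_def)
  next
    case 4
    then have h: "h = int k + 1 - int n" by simp
    have a: "nat (int (Suc n) + h) = Suc (Suc k)" using h by simp
    have b: "nat (int n + (h - 1)) = k" using h by simp
    have c: "nat (int n + (h + 1)) = Suc (Suc k)" using h by simp
    have d: "nat (int n + h) = Suc k" using h by simp
    have "2 * Suc n = Suc (Suc (2*n))" by simp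
    then show ?thesis unfolding cb_def using h a b c d by simp
  qed
qed

lemma cnt_cb: "cnt n h = cb n h"
proof (induction n arbitrary: h)
  case 0 then show ?case by (auto simp: cnt_0 cb_def)
next
  case (Suc n) then show ?case by (simp add: cnt_Suc cb_Suc)
qed

lemma abs_fact: "real (nat \<bar>h+1\<bar>) + real (nat \<bar>h-1\<bar>) + 2 * real (nat \<bar>h\<bar>)
   = 4 * real (nat \<bar>h\<bar>) + 2 * (if h = 0 then 1 else 0)" for h :: int
  by (cases "h > 0"; cases "h = 0"; simp; linarith)

lemma Ec_Suc: "Ec (Suc n) = 4 * Ec n + 2 * cnt n 0"
proof -
  have "Ec (Suc n) = (\<Sum>r\<in>Vset n. real (nat \<bar>hs r+1\<bar>) + real (nat \<bar>hs r-1\<bar>) + 2 * real (nat \<bar>hs r\<bar>))"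
    unfolding Ec_def sum_Vset_Suc_snoc by (simp add: add.assoc)
  also have "\<dots> = (\<Sum>r\<in>Vset n. 4 * real (nat \<bar>hs r\<bar>) + 2 * (if hs r = 0 then 1 else 0))"
    by (rule sum.cong[OF refl]) (rule abs_fact)
  finally show ?thesis by (simp add: Ec_def cnt_def sum.distrib sum_distrib_left)
qed

lemma dbar_snoc: "dbar (r@[s]) = dbar r + nat \<bar>hs r + step_height s\<bar>"
  by (simp add: dbar_ds ds_append)

lemma Wc_Suc: "Wc (Suc n) = 4 * Wc n + Ec (Suc n)"
  unfolding Wc_def Ec_def sum_Vset_Suc_snoc dbar_snoc
  by (simp add: sum.distrib sum_distrib_left)

lemma central_nat: "Suc n * (Suc (Suc (2*n)) choose Suc n) = (4*n+2) * ((2*n) choose n)"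
proof -
  have a: "Suc n * (Suc (Suc (2*n)) choose Suc n) = Suc (Suc (2*n)) * (Suc (2*n) choose n)"
    by (rule Suc_times_binomial)
  have b: "(Suc (2*n) - n) * (Suc (2*n) choose n) = Suc(2*n) * ((Suc (2*n) - 1) choose n)"
    by (rule binomial_absorb_comp)
  have b': "Suc n * (Suc (2*n) choose n) = Suc(2*n) * ((2*n) choose n)"
    using b by (simp del: binomial_Suc_Suc)
  define X where "X = Suc (2*n) choose n"
  define Y where "Y = (2*n) choose n"
  have b'': "Suc n * X = Suc (2*n) * Y" using b' unfolding X_def Y_def .
  have "Suc n * (Suc n * (Suc (Suc (2*n)) choose Suc n)) = Suc (Suc (2*n)) * (Suc n * X)"
    unfolding a X_def by (simp only: ac_simps)
  also have "\<dots> = Suc n * ((4*n+2) * Y)" unfolding b'' by (simp add: algebra_simps)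
  finally have "Suc n * (Suc n * (Suc (Suc (2*n)) choose Suc n)) = Suc n * ((4*n+2) * ((2*n) choose n))"
    unfolding Y_def .
  then show ?thesis by (metis Suc_neq_Zero mult_left_cancel)
qed

definition cc :: "nat \<Rightarrow> real" where "cc n = real ((2*n) choose n)"

lemma cc_Suc: "cc (Suc n) * (n+1) = (4*n+2) * cc n"
proof -
  have e: "2 * Suc n = Suc (Suc (2*n))" by simp
  show ?thesis unfolding cc_def e using arg_cong[OF central_nat[of n], of real]
    by (simp del: binomial_Suc_Suc add: algebra_simps)
qed

lemma cc_Suc': "cc (Suc n) = (4*real n+2) * cc n / (real n+1)"
  using cc_Suc[of n] by (simp add: field_simps)

lemma Wc_closed: "Ec n = n * cc n \<and> 3 * Wc n = n * (2*n+1) * cc n"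
proof (induction n)
  case 0 then show ?case by (simp add: Ec_def Wc_def Vset_0 dbar_def)
next
  case (Suc n)
  have z: "cnt n 0 = cc n" by (simp add: cnt_cb cb_def cc_def)
  have E: "Ec (Suc n) = Suc n * cc (Suc n)"
    using Suc.IH unfolding cc_Suc' by (simp add: Ec_Suc z field_simps)
  have "3 * Wc (Suc n) = 4 * (3 * Wc n) + 3 * Ec (Suc n)" by (simp add: Wc_Suc)
  also have "\<dots> = 4 * (real n * (2*real n+1) * cc n) + 3 * ((real n + 1) * cc (Suc n))"
    using Suc.IH E by simp
  also have "\<dots> = (real n + 1) * (2 * real n + 3) * cc (Suc n)"
    unfolding cc_Suc' by (simp add: field_simps)
  finally have "3 * Wc (Suc n) = Suc n * (2 * Suc n + 1) * cc (Suc n)" by (simp add: algebra_simps)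
  with E show ?case by (simp add: algebra_simps)
qed

definition g :: "nat \<Rightarrow> real" where "g n = ((-5/2) gchoose n) * (-4)^n"

lemma g_closed: "3 * g n = (2*n+1) * (2*n+3) * cc n"
proof (induction n)
  case 0 then show ?case by (simp add: g_def cc_def)
next
  case (Suc n)
  have m: "((-5/2::real) gchoose Suc n) = (-5/2 - n) / (n+1) * ((-5/2) gchoose n)"
    using gbinomial_mult_1[of "-5/2::real" n] by (simp add: field_simps)
  have "3 * g (Suc n) = (3 * g n) * (4*n+10) / (n+1)"
    unfolding g_def m by (simp add: field_simps)
  also have "\<dots> = (2 * Suc n + 1) * (2 * Suc n + 3) * cc (Suc n)"
    using Suc.IH unfolding cc_Suc' by (simp add: field_simps)
  finally show ?case by (simp add: algebra_simps)
qed

lemma Wc_g: "Wc (Suc n) = 2 * g n"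
proof -
  have "3 * Wc (Suc n) = (2*real n+3) * (real n+1) * cc (Suc n)"
    using Wc_closed[of "Suc n"] by (simp add: algebra_simps)
  also have "\<dots> = 2 * ((2*real n+1) * (2*real n+3) * cc n)" unfolding cc_Suc' by (simp add: field_simps)
  also have "\<dots> = 3 * (2 * g n)" using g_closed[of n] by simp
  finally have "3 * Wc (Suc n) = 3 * (2 * g n)" .
  then show ?thesis by simp
qed




lemma wgf_nth: "fps_nth (wgf Vset) n = Wc n"
  by (simp add: wgf_def Wc_def)

lemma Wc_0: "Wc 0 = 0" by (simp add: Wc_def Vset_0 dbar_def)

lemma series_powr:
  assumes "\<bar>x\<bar> < 1/4"
  shows "(\<lambda>n. Wc n * x^n) sums (2 * x * (1 - 4*x) powr (-5/2))"
proof -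
  have "\<bar>-4*x\<bar> < 1" using assms by simp
  from gen_binomial_real[OF this, of "-5/2"]
  have "(\<lambda>n. g n * x^n) sums ((1 - 4*x) powr (-5/2))"
    by (simp add: g_def mult.assoc flip: power_mult_distrib)
  from sums_mult[OF this, of "2*x"]
  have "(\<lambda>n. Wc (Suc n) * x^(Suc n)) sums (2 * x * (1 - 4*x) powr (-5/2))"
    by (simp add: Wc_g algebra_simps)
  then show ?thesis by (subst (asm) sums_Suc_iff) (simp add: Wc_0)
qed

lemma closed_eq:
  fixes x :: real
  assumes "\<bar>x\<bar> < 1/4"
  shows "2 * x * (1 - 4*x) powr (-5/2) =
    (8 * x * (1 + sqrt (1 - 4*x) - x * (3 + sqrt (1 - 4*x)))
              / ((1 - 4*x) * (1 - 4*x + sqrt (1 - 4*x)) ^ 3))"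
proof -
  define s where "s = sqrt (1 - 4*x)"
  have p: "1 - 4*x > 0" using assms by simp
  have s0: "s > 0" using p by (simp add: s_def)
  have s2: "s^2 = 1 - 4*x" using p by (simp add: s_def)
  have "(1 - 4*x) powr (5/2) = (1-4*x) powr (2 + 1/2)" by simp
  also have "\<dots> = (1-4*x)^2 * sqrt (1-4*x)"
    using p by (simp only: powr_add) (simp add: powr_half_sqrt powr_numeral)
  also have "\<dots> = (s^2)^2 * s" unfolding s_def using p by simp
  also have "\<dots> = s^5" by (simp flip: power_mult power_Suc2)
  finally have a: "(1 - 4*x) powr (5/2) = s^5" .
  have m52: "(-5/2::real) = -(5/2)" by simp
  then have "(1 - 4*x) powr (-5/2) = inverse ((1 - 4*x) powr (5/2))" by (simp only: powr_minus)
  then have b: "(1 - 4*x) powr (-5/2) = 1 / s^5" unfolding a by (simp add: inverse_eq_divide)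
  have x4: "4*x = 1 - s^2" using s2 by simp
  have N: "4*(1 + s - x*(3+s)) = (1+s)^3"
  proof -
    have "4*(1 + s - x*(3+s)) = 4 + 4 * s - (4*x) * (3+s)" by (simp add: algebra_simps)
    also have "\<dots> = (1+s)^3" unfolding x4 by (simp add: algebra_simps power2_eq_square power3_eq_cube)
    finally show ?thesis .
  qed
  have sp: "s^2 + s = s*(1+s)" by (simp add: algebra_simps power2_eq_square)
  have Dn: "(1 - 4*x) * (1 - 4*x + s)^3 = s^5 * (1+s)^3"
    unfolding s2[symmetric] sp power_mult_distrib by (simp add: eval_nat_numeral)
  have "8 * x * (1 + s - x * (3 + s)) / ((1 - 4*x) * (1 - 4*x + s) ^ 3)
      = 2 * x * (4*(1 + s - x * (3 + s))) / ((1 - 4*x) * (1 - 4*x + s) ^ 3)" by simp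
  also have "\<dots> = 2 * x * (1+s)^3 / (s^5 * (1+s)^3)" unfolding N Dn ..
  also have "\<dots> = 2 * x * (1 / s^5)" using s0 by (simp add: field_simps)
  finally show ?thesis unfolding b s_def by simp
qed

lemma part2: "\<forall>x::real. \<bar>x\<bar> < 1/4 \<longrightarrow>
           (\<lambda>n. fps_nth (wgf Vset) n * x ^ n) sums
             (8 * x * (1 + sqrt (1 - 4*x) - x * (3 + sqrt (1 - 4*x)))
              / ((1 - 4*x) * (1 - 4*x + sqrt (1 - 4*x)) ^ 3))"
  using series_powr closed_eq by (simp add: wgf_nth)




lemma first_return:
  "c \<ge> 0 \<Longrightarrow> \<not> ok c r \<Longrightarrow> \<exists>a b. r = a @ D # b \<and> ok c a \<and> c + hs a = 0"
proof (induction r arbitrary: c)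
  case Nil then show ?case by simp
next
  case (Cons s r)
  show ?case
  proof (cases "c + step_height s \<ge> 0")
    case True
    then have "\<not> ok (c + step_height s) r" using Cons.prems by simp
    from Cons.IH[OF True this] obtain a b where
      "r = a @ D # b" "ok (c + step_height s) a" "c + step_height s + hs a = 0" by blast
    then show ?thesis using True
      by (intro exI[of _ "s#a"] exI[of _ b]) (simp add: add.assoc)
  next
    case False
    then have "s = D" "c = 0" using Cons.prems(1) by (cases s; simp)+
    then show ?thesis by (intro exI[of _ "[]"] exI[of _ r]) simp
  qed
qed

lemma ok_D_false: "c + hs a = 0 \<Longrightarrow> \<not> ok c (a @ D # b)"
  by (simp add: ok_append)

lemma first_return_unique:
  "ok c a \<Longrightarrow> c + hs a = 0 \<Longrightarrow> ok c a' \<Longrightarrow> c + hs a' = 0 \<Longrightarrow>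
   a @ D # b = a' @ D # b' \<Longrightarrow> a = a' \<and> b = b'"
proof (induction a arbitrary: c a')
  case Nil
  then show ?case
  proof (cases a')
    case (Cons s t)
    then have "s = D" "c = 0" using Nil by auto
    then show ?thesis using Nil Cons by simp
  qed simp
next
  case (Cons s a)
  show ?case
  proof (cases a')
    case Nil
    then have "s = D" "c = 0" using Cons.prems by auto
    then show ?thesis using Cons.prems by simp
  next
    case (Cons s' t)
    then have "s' = s" using Cons.prems(5) by simp
    then show ?thesis using Cons.IH[of "c + step_height s" t] Cons.prems \<open>a' = s' # t\<close>
      by (simp add: add.assoc)
  qed
qed

lemma ds_shift: "ok a r \<Longrightarrow> a \<ge> 0 \<Longrightarrow> c \<ge> 0 \<Longrightarrow> ds (a + c) r = nat c * length r + ds a r"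
proof (induction r arbitrary: a)
  case Nil then show ?case by simp
next
  case (Cons s r)
  have IH: "ds (a + step_height s + c) r = nat c * length r + ds (a + step_height s) r"
    using Cons by simp
  have h: "nat (a + step_height s + c) = nat (a + step_height s) + nat c"
    using Cons.prems by (intro nat_add_distrib) auto
  have e1: "ds (a + c) (s#r) = nat (a + step_height s + c) + ds (a + step_height s + c) r"
    using Cons.prems by (simp add: algebra_simps)
  have e2: "ds a (s#r) = nat (a + step_height s) + ds (a + step_height s) r"
    using Cons.prems by simp
  show ?case unfolding e1 e2 h IH by simp
qed

fun fs :: "step \<Rightarrow> step" where
  "fs U = D" | "fs D = U" | "fs O1 = O1" | "fs O2 = O2"

lemma fs_fs[simp]: "fs (fs s) = s" by (cases s) auto
lemma fs_height[simp]: "step_height (fs s) = - step_height s" by (cases s) auto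

lemma ds_flip: "ds c (map fs r) = ds (-c) r"
proof (induction r arbitrary: c)
  case Nil then show ?case by simp
next
  case (Cons s r)
  have "\<bar>c - step_height s\<bar> = \<bar>-c + step_height s\<bar>" by simp
  then show ?case using Cons by (simp add: Cons)
qed

lemma sum_flip: "(\<Sum>r\<in>Vset m. f (map fs r)) = (\<Sum>r\<in>Vset m. f r)"
proof (rule sum.reindex_bij_witness[where i="map fs" and j="map fs"])
qed (auto simp: Vset_def comp_def)

definition Vc :: "nat \<Rightarrow> real" where "Vc n = real (card (Vset n))"
definition Nc :: "nat \<Rightarrow> real" where "Nc n = real (card (Nset n))"
definition Mc :: "nat \<Rightarrow> real" where "Mc n = real (card (Mset n))"
definition NW :: "nat \<Rightarrow> real" where "NW n = (\<Sum>r\<in>Nset n. real (dbar r))"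
definition MW :: "nat \<Rightarrow> real" where "MW n = (\<Sum>r\<in>Mset n. real (dbar r))"

definition Bset :: "nat \<Rightarrow> step list set" where
  "Bset m = {r \<in> Vset m. \<not> ok 0 r}"

lemma Vset_split: "Vset m = Nset m \<union> Bset m" "Nset m \<inter> Bset m = {}"
  by (auto simp: Nset_ok Bset_def Vset_def)

lemma Bset_image: "Bset m = (\<lambda>(k,(a,b)). a @ D # b) ` (SIGMA k:{..<m}. Mset k \<times> Vset (m - 1 - k))"
proof
  show "Bset m \<subseteq> (\<lambda>(k,(a,b)). a @ D # b) ` (SIGMA k:{..<m}. Mset k \<times> Vset (m - 1 - k))"
  proof
    fix r assume "r \<in> Bset m"
    then have r: "length r = m" "\<not> ok 0 r" by (auto simp: Bset_def Vset_def)
    from first_return[OF _ r(2)] obtain a b where ab: "r = a @ D # b" "ok 0 a" "hs a = 0" by auto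
    have "length a < m" "length b = m - 1 - length a" using r(1) ab(1) by auto
    then have "(length a, (a, b)) \<in> (SIGMA k:{..<m}. Mset k \<times> Vset (m - 1 - k))"
      using ab by (auto simp: Mset_ok Vset_def)
    then show "r \<in> (\<lambda>(k,(a,b)). a @ D # b) ` (SIGMA k:{..<m}. Mset k \<times> Vset (m - 1 - k))"
      using ab(1) by (auto intro!: image_eqI)
  qed
next
  show "(\<lambda>(k,(a,b)). a @ D # b) ` (SIGMA k:{..<m}. Mset k \<times> Vset (m - 1 - k)) \<subseteq> Bset m"
    by (auto simp: Bset_def Mset_ok Vset_def ok_D_false)
qed

lemma Bset_inj: "inj_on (\<lambda>(k,(a,b)). a @ D # b) (SIGMA k:{..<m}. Mset k \<times> Vset (m - 1 - k))"
proof (rule inj_onI)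
  fix p q
  assume pq: "p \<in> (SIGMA k:{..<m}. Mset k \<times> Vset (m - 1 - k))"
    "q \<in> (SIGMA k:{..<m}. Mset k \<times> Vset (m - 1 - k))"
    "(\<lambda>(k,(a,b)). a @ D # b) p = (\<lambda>(k,(a,b)). a @ D # b) q"
  obtain k a b where P: "p = (k,a,b)" by (metis prod_cases3)
  obtain k' a' b' where Q: "q = (k',a',b')" by (metis prod_cases3)
  have h: "ok 0 a" "hs a = 0" "ok 0 a'" "hs a' = 0" "a@D#b = a'@D#b'" "k = length a" "k' = length a'"
    using pq unfolding P Q by (simp_all add: Mset_ok)
  have "a = a' \<and> b = b'" using first_return_unique[of 0 a a' b b'] h by simp
  then show "p = q" using P Q h by simp
qed

lemma dbar_UDB: "ok 0 a \<Longrightarrow> hs a = 0 \<Longrightarrow> dbar (U # a @ D # b) = length a + 1 + dbar a + dbar b"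
  using ds_shift[of 0 a 1] by (simp add: dbar_ds ds_append)

lemma dbar_UN: "ok 0 a \<Longrightarrow> dbar (U # a) = length a + 1 + dbar a"
  using ds_shift[of 0 a 1] by (simp add: dbar_ds)

lemma inner_prod: "(\<Sum>(a,b)\<in>Mset k \<times> Vset j. real (k + 1) + real (dbar a) + real (dbar b))
        = real (k+1) * Mc k * Vc j + MW k * Vc j + Mc k * Wc j"
  by (simp add: sum.cartesian_product[symmetric] sum.distrib Mc_def Vc_def MW_def Wc_def
          sum_distrib_left sum_distrib_right algebra_simps)

lemma sum_B: "(\<Sum>r\<in>Bset m. real (dbar (U # r))) =
   (\<Sum>k<m. real (k+1) * Mc k * Vc (m-1-k) + MW k * Vc (m-1-k) + Mc k * Wc (m-1-k))"
proof -
  have "(\<Sum>r\<in>Bset m. real (dbar (U # r))) =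
     (\<Sum>(k,(a,b))\<in>(SIGMA k:{..<m}. Mset k \<times> Vset (m - 1 - k)). real (dbar (U # a @ D # b)))"
    unfolding Bset_image by (subst sum.reindex[OF Bset_inj]) (simp add: case_prod_unfold)
  also have "\<dots> = (\<Sum>k<m. \<Sum>(a,b)\<in>Mset k \<times> Vset (m - 1 - k). real (dbar (U # a @ D # b)))"
    by (subst sum.Sigma) (auto simp: case_prod_unfold)
  also have "\<dots> = (\<Sum>k<m. \<Sum>(a,b)\<in>Mset k \<times> Vset (m - 1 - k). real (k + 1) + real (dbar a) + real (dbar b))"
    by (intro sum.cong refl) (auto simp: Mset_ok dbar_UDB)
  also have "\<dots> = (\<Sum>k<m. real (k+1) * Mc k * Vc (m-1-k) + MW k * Vc (m-1-k) + Mc k * Wc (m-1-k))"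
    by (rule sum.cong[OF refl]) (rule inner_prod)
  finally show ?thesis .
qed

lemma sum_N: "(\<Sum>r\<in>Nset m. real (dbar (U # r))) = real (m+1) * Nc m + NW m"
proof -
  have "(\<Sum>r\<in>Nset m. real (dbar (U # r))) = (\<Sum>r\<in>Nset m. real m + 1 + real (dbar r))"
    by (intro sum.cong refl) (auto simp: Nset_ok dbar_UN)
  then show ?thesis by (simp add: sum.distrib Nc_def NW_def algebra_simps)
qed

lemma Wc_rec: "Wc (Suc m) = 2 * Wc m + 2 * (real (m+1) * Nc m + NW m) +
   2 * (\<Sum>k<m. real (k+1) * Mc k * Vc (m-1-k) + MW k * Vc (m-1-k) + Mc k * Wc (m-1-k))"
proof -
  have O: "dbar (O1 # r) = dbar r" "dbar (O2 # r) = dbar r" for r by (simp_all add: dbar_ds)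
  have Dd: "dbar (D # r) = dbar (U # map fs r)" for r by (simp add: dbar_ds ds_flip)
  have "Wc (Suc m) = (\<Sum>r\<in>Vset m. real (dbar (U#r))) + (\<Sum>r\<in>Vset m. real (dbar (D#r))) + 2 * Wc m"
    unfolding Wc_def sum_Vset_Suc_Cons O by (simp add: sum.distrib sum_distrib_left)
  also have "(\<Sum>r\<in>Vset m. real (dbar (D#r))) = (\<Sum>r\<in>Vset m. real (dbar (U#r)))"
    unfolding Dd by (rule sum_flip)
  also have "(\<Sum>r\<in>Vset m. real (dbar (U#r))) = real (m+1) * Nc m + NW m +
      (\<Sum>k<m. real (k+1) * Mc k * Vc (m-1-k) + MW k * Vc (m-1-k) + Mc k * Wc (m-1-k))"
  proof -
    have "(\<Sum>r\<in>Vset m. real (dbar (U#r))) = (\<Sum>r\<in>Nset m. real (dbar (U#r))) + (\<Sum>r\<in>Bset m. real (dbar (U#r)))"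
      unfolding Vset_split(1) by (rule sum.union_disjoint, simp, simp add: Bset_def, rule Vset_split(2))
    then show ?thesis unfolding sum_N sum_B by simp
  qed
  finally show ?thesis by simp
qed




lemma gfV: "fps_nth (gf Vset) n = Vc n" by (simp add: gf_def Vc_def)
lemma gfN: "fps_nth (gf Nset) n = Nc n" by (simp add: gf_def Nc_def)
lemma gfM: "fps_nth (gf Mset) n = Mc n" by (simp add: gf_def Mc_def)
lemma wgfV: "fps_nth (wgf Vset) n = Wc n" by (simp add: wgf_def Wc_def)
lemma wgfN: "fps_nth (wgf Nset) n = NW n" by (simp add: wgf_def NW_def)
lemma wgfM: "fps_nth (wgf Mset) n = MW n" by (simp add: wgf_def MW_def)

lemma c1: "fps_nth (2 * fps_X * f) n = 2 * (if n = 0 then 0 else fps_nth (f :: real fps) (n - 1))"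
proof -
  have e: "2 * fps_X * f = fps_const 2 * (fps_X * f)" by (simp add: numeral_fps_const mult.assoc)
  show ?thesis unfolding e by simp
qed

lemma c2: "fps_nth (2 * fps_X^2 * f * h) n = 2 * (if n < 2 then 0 else fps_nth ((f :: real fps) * h) (n - 2))"
proof -
  have e: "2 * fps_X^2 * f * h = fps_const 2 * (fps_X^2 * (f * h))" by (simp add: numeral_fps_const mult.assoc)
  show ?thesis unfolding e by (simp add: fps_X_power_mult_nth)
qed

lemma dM: "fps_nth (fps_deriv (fps_X * gf Mset)) k = real (k+1) * Mc k"
  by (simp add: gfM algebra_simps)
lemma dN: "fps_nth (fps_deriv (fps_X * gf Nset)) k = real (k+1) * Nc k"
  by (simp add: gfN algebra_simps)

lemma part1: "wgf Vset = 2 * fps_X * wgf Vset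
            + 2 * fps_X ^ 2 * wgf Mset * gf Vset
            + 2 * fps_X ^ 2 * gf Mset * wgf Vset
            + 2 * fps_X ^ 2 * gf Vset * fps_deriv (fps_X * gf Mset)
            + 2 * fps_X * wgf Nset
            + 2 * fps_X * fps_deriv (fps_X * gf Nset)"
proof (rule fps_ext)
  fix n
  show "fps_nth (wgf Vset) n = fps_nth (2 * fps_X * wgf Vset
            + 2 * fps_X ^ 2 * wgf Mset * gf Vset
            + 2 * fps_X ^ 2 * gf Mset * wgf Vset
            + 2 * fps_X ^ 2 * gf Vset * fps_deriv (fps_X * gf Mset)
            + 2 * fps_X * wgf Nset
            + 2 * fps_X * fps_deriv (fps_X * gf Nset)) n"
  proof (cases n)
    case 0 then show ?thesis by (simp add: c1 c2 wgfV Wc_def Vset_0 dbar_def)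
  next
    case (Suc m)
    have S: "(\<Sum>k<m. real (k+1) * Mc k * Vc (m-1-k) + MW k * Vc (m-1-k) + Mc k * Wc (m-1-k))
       = (if m < 1 then 0 else fps_nth (wgf Mset * gf Vset) (m - 1) + fps_nth (gf Mset * wgf Vset) (m - 1)
            + fps_nth (gf Vset * fps_deriv (fps_X * gf Mset)) (m - 1))"
    proof (cases m)
      case 0 then show ?thesis by simp
    next
      case (Suc p)
      have r: "fps_nth (gf Vset * fps_deriv (fps_X * gf Mset)) p = (\<Sum>k\<le>p. real (k+1) * Mc k * Vc (p-k))"
      proof -
        have "fps_nth (gf Vset * fps_deriv (fps_X * gf Mset)) p = (\<Sum>i=0..p. Vc i * (real (p - i + 1) * Mc (p - i)))"
          by (simp only: fps_mult_nth gfV dM)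
        also have "\<dots> = (\<Sum>i=0..p. Vc (p - i) * (real (p - (p - i) + 1) * Mc (p - (p - i))))"
          by (subst sum.atLeastAtMost_rev) simp
        also have "\<dots> = (\<Sum>k\<le>p. real (k+1) * Mc k * Vc (p-k))"
          by (simp add: atLeast0AtMost) (rule sum.cong, auto)
        finally show ?thesis .
      qed
      have "(\<Sum>k<m. real (k+1) * Mc k * Vc (m-1-k) + MW k * Vc (m-1-k) + Mc k * Wc (m-1-k))
         = (\<Sum>k\<le>p. MW k * Vc (p-k)) + (\<Sum>k\<le>p. Mc k * Wc (p-k)) + (\<Sum>k\<le>p. real (k+1) * Mc k * Vc (p-k))"
        using Suc by (simp add: sum.distrib lessThan_Suc_atMost)
      then show ?thesis using Suc r
        by (simp add: fps_mult_nth gfV gfM wgfV wgfM atLeast0AtMost)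
    qed
    have T: "fps_nth (2 * fps_X * fps_deriv (fps_X * gf Nset)) (Suc m) = 2 * (real (m+1) * Nc m)"
      by (simp only: c1 dN) simp
    show ?thesis unfolding Suc fps_add_nth c1 c2 T
      using Wc_rec[of m] S by (simp add: wgfV wgfN gfN algebra_simps)
  qed
qed


theorem proposition6p4:
  shows "wgf Vset = 2 * fps_X * wgf Vset
            + 2 * fps_X ^ 2 * wgf Mset * gf Vset
            + 2 * fps_X ^ 2 * gf Mset * wgf Vset
            + 2 * fps_X ^ 2 * gf Vset * fps_deriv (fps_X * gf Mset)
            + 2 * fps_X * wgf Nset
            + 2 * fps_X * fps_deriv (fps_X * gf Nset)
         \<and> (\<forall>x::real. \<bar>x\<bar> < 1/4 \<longrightarrow>
           (\<lambda>n. fps_nth (wgf Vset) n * x ^ n) sums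
             (8 * x * (1 + sqrt (1 - 4*x) - x * (3 + sqrt (1 - 4*x)))
              / ((1 - 4*x) * (1 - 4*x + sqrt (1 - 4*x)) ^ 3)))"
  using part1 part2 by blast

end
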